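(* Let $\mathscr L$ and $\mathscr S$ be countable locally finite graphs with vertex sets $V_{\mathscr L}$, $V_{\mathscr S}$, and let $\pi:V_{\mathscr L}\to V_{\mathscr S}$ be surjective. Assume that there is a measurable way to assign to every infinite self-avoiding path $\gamma:\mathbb N\to V_{\mathscr S}$ an infinite self-avoiding path $\tilde\gamma:\{n_\gamma,n_\gamma+1,\dots\}\to V_{\mathscr L}$ (for some $n_\gamma\in\mathbb N$) such that $\pi(\tilde\gamma_m)=\gamma_m$ for every $m\ge n_\gamma$. For every $v\in V_{\mathscr S}$ let $p_v\in[0,1]$, and consider on $\mathscr S$ the random configuration where each vertex $v$ is retained independently with probability $p_v$. Let $\mathfrak X$ be a random subset of $V_{\mathscr L}$ such that the family $(\mathfrak X\cap\pi^{-1}(\{v\}))_{v\in V_{\mathscr S}}$ is independent and, for every $x\in V_{\mathscr L}$, $\mathbb P(x\in\mathfrak X)\ge p_{\pi(x)}$. Then the probability that there is an infinite path of retained vertices (elements of $\mathfrak X$) in $\mathscr L$ is at least the probability that there is an infinite path of retained vertices in $\mathscr S$.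
   Context: Graphs are simple and undirected; "countable" means finite or countably infinite; locally finite means each vertex has finitely many neighbours. A self-avoiding path visits no vertex twice. The space of infinite paths carries the topology of pointwise convergence (vertex sets discrete) and the associated Borel structure. An infinite path of retained vertices means an infinite self-avoiding path all of whose vertices are retained. *)

theory Defs
  imports "HOL-Probability.Probability"
begin

definition simple_lf_graph :: "('v \<Rightarrow> 'v \<Rightarrow> bool) \<Rightarrow> bool" where
  "simple_lf_graph E \<longleftrightarrow> (\<forall>x y. E x y \<longrightarrow> E y x) \<and> (\<forall>x. \<not> E x x) \<and> (\<forall>x. finite {y. E x y})"

definition inf_path_from :: "('v \<Rightarrow> 'v \<Rightarrow> bool) \<Rightarrow> nat \<Rightarrow> (nat \<Rightarrow> 'v) \<Rightarrow> bool" where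
  "inf_path_from E n g \<longleftrightarrow> inj_on g {n..} \<and> (\<forall>m\<ge>n. E (g m) (g (Suc m)))"

abbreviation inf_path :: "('v \<Rightarrow> 'v \<Rightarrow> bool) \<Rightarrow> (nat \<Rightarrow> 'v) \<Rightarrow> bool" where
  "inf_path E g \<equiv> inf_path_from E 0 g"

text \<open>Sequences of vertices with the product (= Borel of pointwise convergence,
vertex sets discrete and countable) sigma algebra.\<close>
definition seq_space :: "(nat \<Rightarrow> 'v) measure" where
  "seq_space = PiM UNIV (\<lambda>_. count_space UNIV)"

definition path_space :: "('v \<Rightarrow> 'v \<Rightarrow> bool) \<Rightarrow> (nat \<Rightarrow> 'v) measure" where
  "path_space E = restrict_space seq_space {g. inf_path E g}"

definition has_inf_retained_path :: "('v \<Rightarrow> 'v \<Rightarrow> bool) \<Rightarrow> ('v \<Rightarrow> bool) \<Rightarrow> bool" where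
  "has_inf_retained_path E R \<longleftrightarrow> (\<exists>g. inf_path E g \<and> (\<forall>m. R (g m)))"

definition site_perc :: "('v \<Rightarrow> real) \<Rightarrow> ('v \<Rightarrow> bool) measure" where
  "site_perc p = PiM UNIV (\<lambda>v. measure_pmf (bernoulli_pmf (p v)))"

end

theory Submission
  imports Defs
begin

definition fibsp :: "('a \<Rightarrow> 'b) \<Rightarrow> 'b \<Rightarrow> ('a \<Rightarrow> bool) measure" where
  "fibsp \<pi> v = PiM (\<pi> -` {v}) (\<lambda>_. count_space (UNIV::bool set))"

lemma pred_fib_comp:
  assumes "\<pi> x = v"
  shows "Measurable.pred (fibsp \<pi> v) (\<lambda>a. a x)"
  unfolding fibsp_def
  using measurable_component_singleton[of x "\<pi> -` {v}" "\<lambda>_. count_space (UNIV::bool set)"] assms by simp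

lemma pred_evt:
  fixes T :: "'a::countable list set"
  assumes "\<And>t x. t \<in> T \<Longrightarrow> x \<in> set t \<Longrightarrow> Measurable.pred M (Q x)"
  shows "Measurable.pred M (\<lambda>w. \<exists>t\<in>T. \<forall>x\<in>set t. Q x w)"
proof -
  have "{w\<in>space M. \<exists>t\<in>T. \<forall>x\<in>set t. Q x w} = (\<Union>t\<in>T. {w\<in>space M. \<forall>x\<in>set t. Q x w})"
    by auto
  also have "\<dots> \<in> sets M"
  proof (rule sets.countable_UN')
    show "countable T" by (rule countable_subset[OF subset_UNIV]) simp
    show "(\<lambda>t. {w \<in> space M. \<forall>x\<in>set t. Q x w}) ` T \<subseteq> sets M"
    proof safe
      fix t assume t: "t \<in> T"
      show "{w \<in> space M. \<forall>x\<in>set t. Q x w} \<in> sets M"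
        by (rule sets.sets_Collect_finite_All) (use assms[OF t] in \<open>auto simp: pred_def\<close>)
    qed
  qed
  finally show ?thesis unfolding pred_def .
qed

lemma section_le:
  fixes \<pi> :: "'a::countable \<Rightarrow> 'b" and T :: "'a list set"
  assumes \<mu>p: "prob_space \<mu>" and \<mu>s: "sets \<mu> = sets (fibsp \<pi> v)"
    and \<nu>p: "prob_space \<nu>" and \<nu>s: "sets \<nu> = sets (fibsp \<pi> v)"
    and P\<mu>: "\<And>x. \<pi> x = v \<Longrightarrow> ennreal q \<le> emeasure \<mu> {a\<in>space \<mu>. a x}"
    and P\<nu>: "\<And>S. restrict (\<lambda>_. False) (\<pi> -` {v}) \<notin> S \<Longrightarrow> emeasure \<nu> S \<le> ennreal q"
    and T: "\<And>t. t\<in>T \<Longrightarrow> inj_on \<pi> (set t)"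
  shows "emeasure \<nu> {a\<in>space (fibsp \<pi> v). \<exists>t\<in>T. \<forall>x\<in>set t. (y(v:=a)) (\<pi> x) x}
       \<le> emeasure \<mu> {a\<in>space (fibsp \<pi> v). \<exists>t\<in>T. \<forall>x\<in>set t. (y(v:=a)) (\<pi> x) x}"
proof -
  define S where "S = {a\<in>space (fibsp \<pi> v). \<exists>t\<in>T. \<forall>x\<in>set t. (y(v:=a)) (\<pi> x) x}"
  interpret mu: prob_space \<mu> by fact
  interpret nu: prob_space \<nu> by fact
  have sp\<mu>: "space \<mu> = space (fibsp \<pi> v)" using \<mu>s by (rule sets_eq_imp_space_eq)
  have sp\<nu>: "space \<nu> = space (fibsp \<pi> v)" using \<nu>s by (rule sets_eq_imp_space_eq)
  have "Measurable.pred (fibsp \<pi> v) (\<lambda>a. \<exists>t\<in>T. \<forall>x\<in>set t. (y(v:=a)) (\<pi> x) x)"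
  proof (rule pred_evt)
    fix t x assume "t \<in> T" "x \<in> set t"
    show "Measurable.pred (fibsp \<pi> v) (\<lambda>a. (y(v := a)) (\<pi> x) x)"
    proof (cases "\<pi> x = v")
      case True then show ?thesis using pred_fib_comp[of \<pi> x v, OF True] by simp
    next
      case False then show ?thesis by (cases "y (\<pi> x) x") auto
    qed
  qed
  then have Ss: "S \<in> sets \<mu>" unfolding S_def pred_def \<mu>s .
  define good where "good t \<longleftrightarrow> (\<forall>x\<in>set t. \<pi> x \<noteq> v \<longrightarrow> y (\<pi> x) x)" for t
  show ?thesis
  proof (cases "\<exists>t\<in>T. good t \<and> (\<forall>x\<in>set t. \<pi> x \<noteq> v)")
    case True
    then have "S = space \<mu>" unfolding S_def sp\<mu> good_def by fastforce
    then show ?thesis unfolding S_def[symmetric] using nu.emeasure_space_1 mu.emeasure_space_1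
      emeasure_space[of \<nu> S] by simp
  next
    case nT: False
    show ?thesis
    proof (cases "\<exists>t\<in>T. good t")
      case True
      then obtain t0 where t0: "t0 \<in> T" "good t0" by blast
      with nT obtain x0 where x0: "x0 \<in> set t0" "\<pi> x0 = v" by blast
      have sub: "{a\<in>space \<mu>. a x0} \<subseteq> S"
      proof
        fix a assume a: "a \<in> {a\<in>space \<mu>. a x0}"
        have "\<forall>x\<in>set t0. (y(v:=a)) (\<pi> x) x"
        proof
          fix x assume x: "x \<in> set t0"
          show "(y(v:=a)) (\<pi> x) x"
          proof (cases "\<pi> x = v")
            case True
            then have "x = x0" using T[OF t0(1)] x x0 by (auto dest: inj_onD)
            then show ?thesis using a x0 by simp
          next
            case False then show ?thesis using t0(2) x unfolding good_def by simp
          qed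
        qed
        then show "a \<in> S" using a t0(1) unfolding S_def sp\<mu> by blast
      qed
      have "emeasure \<nu> S \<le> ennreal q"
      proof (rule P\<nu>)
        show "restrict (\<lambda>_. False) (\<pi> -` {v}) \<notin> S"
        proof
          assume "restrict (\<lambda>_. False) (\<pi> -` {v}) \<in> S"
          then obtain t where t: "t \<in> T" "\<forall>x\<in>set t. (y(v:=restrict (\<lambda>_. False) (\<pi> -` {v}))) (\<pi> x) x"
            unfolding S_def by blast
          then have "good t" unfolding good_def by auto
          with nT t obtain x where "x \<in> set t" "\<pi> x = v" by blast
          with t show False by auto
        qed
      qed
      also have "ennreal q \<le> emeasure \<mu> {a\<in>space \<mu>. a x0}" by (rule P\<mu>[OF x0(2)])
      also have "\<dots> \<le> emeasure \<mu> S" by (rule emeasure_mono[OF sub Ss])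
      finally show ?thesis unfolding S_def .
    next
      case False
      then have "S = {}" unfolding S_def good_def by fastforce
      then show ?thesis unfolding S_def[symmetric] by simp
    qed
  qed
qed

lemma decomp:
  fixes \<kappa> :: "'b \<Rightarrow> ('a \<Rightarrow> bool) measure" and \<rho> :: "('a \<Rightarrow> bool) measure"
  assumes v: "v \<notin> V"
    and \<kappa>p: "\<And>u. u \<in> V \<Longrightarrow> prob_space (\<kappa> u)"
    and \<rho>p: "prob_space \<rho>" and \<rho>s: "sets \<rho> = sets (fibsp \<pi> v)"
    and A: "{w\<in>space (PiM (insert v V) (\<kappa>(v:=\<rho>))). P w} \<in> sets (PiM (insert v V) (\<kappa>(v:=\<rho>)))"
  shows "emeasure (PiM (insert v V) (\<kappa>(v:=\<rho>))) {w\<in>space (PiM (insert v V) (\<kappa>(v:=\<rho>))). P w}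
     = (\<integral>\<^sup>+ y. emeasure \<rho> {a\<in>space (fibsp \<pi> v). P (y(v:=a))} \<partial>(PiM V \<kappa>))"
proof -
  define K where "K = \<kappa>(v:=\<rho>)"
  define Q where "Q = PiM V \<kappa>"
  define N where "N = \<rho> \<Otimes>\<^sub>M Q"
  define g where "g = (\<lambda>(x::'a\<Rightarrow>bool, X::'b \<Rightarrow> 'a \<Rightarrow> bool). X(v:=x))"
  define A' where "A' = {w\<in>space (PiM (insert v V) K). P w}"
  have QK: "PiM V K = Q" unfolding Q_def K_def by (rule PiM_cong) (use v in auto)
  have Kp: "\<And>u. u \<in> insert v V \<Longrightarrow> prob_space (K u)" using \<kappa>p \<rho>p v unfolding K_def by auto
  interpret Qp: prob_space Q unfolding Q_def by (rule prob_space_PiM) (rule \<kappa>p)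
  interpret rp: prob_space \<rho> by fact
  interpret pair_sigma_finite \<rho> Q by unfold_locales
  have sp\<rho>: "space \<rho> = space (fibsp \<pi> v)" using \<rho>s by (rule sets_eq_imp_space_eq)
  have gm: "g \<in> measurable N (PiM (insert v V) K)"
    unfolding g_def N_def
  proof -
    have "(\<lambda>x. (snd x)(v := fst x)) \<in> measurable (\<rho> \<Otimes>\<^sub>M Q) (PiM (insert v V) K)"
    proof (rule measurable_fun_upd[where J=V])
      show "insert v V = V \<union> {v}" by auto
      show "snd \<in> measurable (\<rho> \<Otimes>\<^sub>M Q) (PiM V K)" unfolding QK by (rule measurable_snd)
      show "fst \<in> measurable (\<rho> \<Otimes>\<^sub>M Q) (K v)" unfolding K_def by simp
    qed
    then show "(\<lambda>(x, X). X(v := x)) \<in> measurable (\<rho> \<Otimes>\<^sub>M Q) (PiM (insert v V) K)"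
      by (simp add: case_prod_beta')
  qed
  have deq: "distr N (PiM (insert v V) K) g = PiM (insert v V) K"
  proof -
    have Kv: "K v = \<rho>" by (simp add: K_def)
    have "distr (K v \<Otimes>\<^sub>M PiM V K) (PiM (insert v V) K) (\<lambda>(x,X). X(v:=x)) = PiM (insert v V) K"
      by (rule distr_pair_PiM_eq_PiM) (use Kp in auto)
    then show ?thesis by (simp add: N_def g_def QK Kv)
  qed
  have A'm: "A' \<in> sets (PiM (insert v V) K)" using A unfolding A'_def K_def .
  have "emeasure (PiM (insert v V) K) A' = emeasure (distr N (PiM (insert v V) K) g) A'"
    by (simp add: deq)
  also have "\<dots> = emeasure N (g -` A' \<inter> space N)"
    by (rule emeasure_distr[OF gm A'm])
  also have "\<dots> = (\<integral>\<^sup>+ y. emeasure \<rho> ((\<lambda>x. (x, y)) -` (g -` A' \<inter> space N)) \<partial>Q)"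
    unfolding N_def
    by (rule emeasure_pair_measure_alt2) (use measurable_sets[OF gm A'm] in \<open>simp add: N_def\<close>)
  also have "\<dots> = (\<integral>\<^sup>+ y. emeasure \<rho> {a\<in>space (fibsp \<pi> v). P (y(v:=a))} \<partial>Q)"
  proof (rule nn_integral_cong)
    fix y assume y: "y \<in> space Q"
    have "(\<lambda>x. (x, y)) -` (g -` A' \<inter> space N) = {a\<in>space (fibsp \<pi> v). P (y(v:=a))}"
    proof (rule set_eqI, rule iffI)
      fix a assume "a \<in> (\<lambda>x. (x, y)) -` (g -` A' \<inter> space N)"
      then show "a \<in> {a\<in>space (fibsp \<pi> v). P (y(v:=a))}"
        unfolding N_def A'_def g_def by (auto simp: space_pair_measure sp\<rho> split: if_splits)
    next
      fix a assume "a \<in> {a\<in>space (fibsp \<pi> v). P (y(v:=a))}"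
      then have a: "a \<in> space (fibsp \<pi> v)" "P (y(v:=a))" by auto
      then have "(a, y) \<in> space N" unfolding N_def using y by (simp add: space_pair_measure sp\<rho>)
      moreover have "g (a, y) \<in> space (PiM (insert v V) K)"
        using measurable_space[OF gm] calculation by blast
      ultimately show "a \<in> (\<lambda>x. (x, y)) -` (g -` A' \<inter> space N)"
        using a unfolding A'_def g_def by simp
    qed
    then show "emeasure \<rho> ((\<lambda>x. (x, y)) -` (g -` A' \<inter> space N)) = emeasure \<rho> {a\<in>space (fibsp \<pi> v). P (y(v:=a))}"
      by simp
  qed
  finally show ?thesis unfolding A'_def K_def Q_def .
qed

lemma evt_meas:
  fixes \<kappa> :: "'b \<Rightarrow> ('a::countable \<Rightarrow> bool) measure" and T :: "'a list set"
  assumes ks: "\<And>u. u \<in> I \<Longrightarrow> sets (\<kappa> u) = sets (fibsp \<pi> u)"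
    and TI: "\<And>t x. t \<in> T \<Longrightarrow> x \<in> set t \<Longrightarrow> \<pi> x \<in> I"
  shows "{w\<in>space (PiM I \<kappa>). \<exists>t\<in>T. \<forall>x\<in>set t. w (\<pi> x) x} \<in> sets (PiM I \<kappa>)"
proof -
  have "Measurable.pred (PiM I \<kappa>) (\<lambda>w. \<exists>t\<in>T. \<forall>x\<in>set t. w (\<pi> x) x)"
  proof (rule pred_evt)
    fix t x assume tx: "t \<in> T" "x \<in> set t"
    have i: "\<pi> x \<in> I" using TI[OF tx] .
    have eq: "measurable (\<kappa> (\<pi> x)) (count_space UNIV) = measurable (fibsp \<pi> (\<pi> x)) (count_space UNIV)"
      by (rule measurable_cong_sets[OF ks[OF i] refl])
    have "(\<lambda>a. a x) \<in> measurable (\<kappa> (\<pi> x)) (count_space UNIV)"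
      unfolding eq by (rule pred_fib_comp) simp
    then show "Measurable.pred (PiM I \<kappa>) (\<lambda>w. w (\<pi> x) x)"
      using measurable_compose[OF measurable_component_singleton[OF i]] by blast
  qed
  then show ?thesis unfolding pred_def .
qed

lemma swap_step:
  fixes \<kappa> :: "'b \<Rightarrow> ('a::countable \<Rightarrow> bool) measure" and \<pi> :: "'a \<Rightarrow> 'b" and T :: "'a list set"
  assumes v: "v \<notin> V"
    and \<kappa>p: "\<And>u. u \<in> V \<Longrightarrow> prob_space (\<kappa> u)"
    and \<kappa>s: "\<And>u. u \<in> V \<Longrightarrow> sets (\<kappa> u) = sets (fibsp \<pi> u)"
    and \<mu>p: "prob_space \<mu>" and \<mu>s: "sets \<mu> = sets (fibsp \<pi> v)"
    and \<nu>p: "prob_space \<nu>" and \<nu>s: "sets \<nu> = sets (fibsp \<pi> v)"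
    and P\<mu>: "\<And>x. \<pi> x = v \<Longrightarrow> ennreal q \<le> emeasure \<mu> {a\<in>space \<mu>. a x}"
    and P\<nu>: "\<And>S. restrict (\<lambda>_. False) (\<pi> -` {v}) \<notin> S \<Longrightarrow> emeasure \<nu> S \<le> ennreal q"
    and Tinj: "\<And>t. t\<in>T \<Longrightarrow> inj_on \<pi> (set t)"
    and TI: "\<And>t x. t \<in> T \<Longrightarrow> x \<in> set t \<Longrightarrow> \<pi> x \<in> insert v V"
  shows "emeasure (PiM (insert v V) (\<kappa>(v:=\<nu>))) {w\<in>space (PiM (insert v V) (\<kappa>(v:=\<nu>))). \<exists>t\<in>T. \<forall>x\<in>set t. w (\<pi> x) x}
       \<le> emeasure (PiM (insert v V) (\<kappa>(v:=\<mu>))) {w\<in>space (PiM (insert v V) (\<kappa>(v:=\<mu>))). \<exists>t\<in>T. \<forall>x\<in>set t. w (\<pi> x) x}"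
proof -
  have m1: "{w\<in>space (PiM (insert v V) (\<kappa>(v:=\<nu>))). \<exists>t\<in>T. \<forall>x\<in>set t. w (\<pi> x) x} \<in> sets (PiM (insert v V) (\<kappa>(v:=\<nu>)))"
    by (rule evt_meas) (use \<kappa>s \<nu>s TI in auto)
  have m2: "{w\<in>space (PiM (insert v V) (\<kappa>(v:=\<mu>))). \<exists>t\<in>T. \<forall>x\<in>set t. w (\<pi> x) x} \<in> sets (PiM (insert v V) (\<kappa>(v:=\<mu>)))"
    by (rule evt_meas) (use \<kappa>s \<mu>s TI in auto)
  have d1: "emeasure (PiM (insert v V) (\<kappa>(v:=\<nu>))) {w\<in>space (PiM (insert v V) (\<kappa>(v:=\<nu>))). \<exists>t\<in>T. \<forall>x\<in>set t. w (\<pi> x) x}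
     = (\<integral>\<^sup>+ y. emeasure \<nu> {a\<in>space (fibsp \<pi> v). \<exists>t\<in>T. \<forall>x\<in>set t. (y(v:=a)) (\<pi> x) x} \<partial>(PiM V \<kappa>))"
    by (rule decomp[OF v \<kappa>p \<nu>p \<nu>s m1])
  have d2: "emeasure (PiM (insert v V) (\<kappa>(v:=\<mu>))) {w\<in>space (PiM (insert v V) (\<kappa>(v:=\<mu>))). \<exists>t\<in>T. \<forall>x\<in>set t. w (\<pi> x) x}
     = (\<integral>\<^sup>+ y. emeasure \<mu> {a\<in>space (fibsp \<pi> v). \<exists>t\<in>T. \<forall>x\<in>set t. (y(v:=a)) (\<pi> x) x} \<partial>(PiM V \<kappa>))"
    by (rule decomp[OF v \<kappa>p \<mu>p \<mu>s m2])
  show ?thesis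
    unfolding d1 d2
  proof (rule nn_integral_mono)
    fix y
    show "emeasure \<nu> {a\<in>space (fibsp \<pi> v). \<exists>t\<in>T. \<forall>x\<in>set t. (y(v:=a)) (\<pi> x) x}
       \<le> emeasure \<mu> {a\<in>space (fibsp \<pi> v). \<exists>t\<in>T. \<forall>x\<in>set t. (y(v:=a)) (\<pi> x) x}"
      by (rule section_le[OF \<mu>p \<mu>s \<nu>p \<nu>s P\<mu> P\<nu> Tinj])
  qed
qed

lemma mix:
  fixes \<mu> \<nu> :: "'b \<Rightarrow> ('a::countable \<Rightarrow> bool) measure" and \<pi> :: "'a \<Rightarrow> 'b" and T :: "'a list set"
  assumes V0: "finite V0"
    and \<mu>p: "\<And>v. v \<in> V0 \<Longrightarrow> prob_space (\<mu> v)" and \<mu>s: "\<And>v. v \<in> V0 \<Longrightarrow> sets (\<mu> v) = sets (fibsp \<pi> v)"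
    and \<nu>p: "\<And>v. v \<in> V0 \<Longrightarrow> prob_space (\<nu> v)" and \<nu>s: "\<And>v. v \<in> V0 \<Longrightarrow> sets (\<nu> v) = sets (fibsp \<pi> v)"
    and P\<mu>: "\<And>x. \<pi> x \<in> V0 \<Longrightarrow> ennreal (q (\<pi> x)) \<le> emeasure (\<mu> (\<pi> x)) {a\<in>space (\<mu> (\<pi> x)). a x}"
    and P\<nu>: "\<And>v S. v \<in> V0 \<Longrightarrow> restrict (\<lambda>_. False) (\<pi> -` {v}) \<notin> S \<Longrightarrow> emeasure (\<nu> v) S \<le> ennreal (q v)"
    and Tinj: "\<And>t. t\<in>T \<Longrightarrow> inj_on \<pi> (set t)"
    and TI: "\<And>t x. t \<in> T \<Longrightarrow> x \<in> set t \<Longrightarrow> \<pi> x \<in> V0"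
    and D: "D \<subseteq> V0"
  shows "emeasure (PiM V0 (\<lambda>u. if u \<in> D then \<nu> u else \<mu> u)) {w\<in>space (PiM V0 (\<lambda>u. if u \<in> D then \<nu> u else \<mu> u)). \<exists>t\<in>T. \<forall>x\<in>set t. w (\<pi> x) x}
       \<le> emeasure (PiM V0 \<mu>) {w\<in>space (PiM V0 \<mu>). \<exists>t\<in>T. \<forall>x\<in>set t. w (\<pi> x) x}"
proof -
  have "finite D" using D V0 by (rule finite_subset)
  then show ?thesis using D
  proof (induction D rule: finite_induct)
    case empty
    then show ?case by simp
  next
    case (insert v D)
    define \<kappa> where "\<kappa> = (\<lambda>u. if u \<in> D then \<nu> u else \<mu> u)"
    have vV: "v \<in> V0" using insert by auto
    have V0eq: "V0 = insert v (V0 - {v})" using vV by auto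
    have e1: "(\<lambda>u. if u \<in> insert v D then \<nu> u else \<mu> u) = \<kappa>(v := \<nu> v)"
      unfolding \<kappa>_def by auto
    have e2: "\<kappa> = \<kappa>(v := \<mu> v)"
      unfolding \<kappa>_def using insert(2) by auto
    have "emeasure (PiM (insert v (V0 - {v})) (\<kappa>(v := \<nu> v))) {w\<in>space (PiM (insert v (V0 - {v})) (\<kappa>(v := \<nu> v))). \<exists>t\<in>T. \<forall>x\<in>set t. w (\<pi> x) x}
       \<le> emeasure (PiM (insert v (V0 - {v})) (\<kappa>(v := \<mu> v))) {w\<in>space (PiM (insert v (V0 - {v})) (\<kappa>(v := \<mu> v))). \<exists>t\<in>T. \<forall>x\<in>set t. w (\<pi> x) x}"
    proof (rule swap_step)
      show "v \<notin> V0 - {v}" by simp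
      show "\<And>u. u \<in> V0 - {v} \<Longrightarrow> prob_space (\<kappa> u)" unfolding \<kappa>_def using \<mu>p \<nu>p by auto
      show "\<And>u. u \<in> V0 - {v} \<Longrightarrow> sets (\<kappa> u) = sets (fibsp \<pi> u)" unfolding \<kappa>_def using \<mu>s \<nu>s by auto
      show "prob_space (\<mu> v)" "sets (\<mu> v) = sets (fibsp \<pi> v)" "prob_space (\<nu> v)" "sets (\<nu> v) = sets (fibsp \<pi> v)"
        using \<mu>p \<mu>s \<nu>p \<nu>s vV by auto
      show "\<And>x. \<pi> x = v \<Longrightarrow> ennreal (q v) \<le> emeasure (\<mu> v) {a \<in> space (\<mu> v). a x}"
        using P\<mu> vV by blast
      show "\<And>S. restrict (\<lambda>_. False) (\<pi> -` {v}) \<notin> S \<Longrightarrow> emeasure (\<nu> v) S \<le> ennreal (q v)"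
        using P\<nu> vV by blast
      show "\<And>t. t \<in> T \<Longrightarrow> inj_on \<pi> (set t)" by (rule Tinj)
      show "\<And>t x. t \<in> T \<Longrightarrow> x \<in> set t \<Longrightarrow> \<pi> x \<in> insert v (V0 - {v})" using TI by auto
    qed
    then have "emeasure (PiM V0 (\<lambda>u. if u \<in> insert v D then \<nu> u else \<mu> u)) {w\<in>space (PiM V0 (\<lambda>u. if u \<in> insert v D then \<nu> u else \<mu> u)). \<exists>t\<in>T. \<forall>x\<in>set t. w (\<pi> x) x}
       \<le> emeasure (PiM V0 \<kappa>) {w\<in>space (PiM V0 \<kappa>). \<exists>t\<in>T. \<forall>x\<in>set t. w (\<pi> x) x}"
      unfolding e1 using V0eq e2 by metis
    also have "\<dots> \<le> emeasure (PiM V0 \<mu>) {w\<in>space (PiM V0 \<mu>). \<exists>t\<in>T. \<forall>x\<in>set t. w (\<pi> x) x}"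
      using insert unfolding \<kappa>_def by auto
    finally show ?case .
  qed
qed

lemma transfer:
  fixes P :: "'c measure" and Z :: "'b \<Rightarrow> 'c \<Rightarrow> ('a::countable \<Rightarrow> bool)" and T :: "'a list set"
  assumes P: "prob_space P" and V0: "V0 \<noteq> {}"
    and ind: "prob_space.indep_vars P (fibsp \<pi>) Z V0"
    and TI: "\<And>t x. t \<in> T \<Longrightarrow> x \<in> set t \<Longrightarrow> \<pi> x \<in> V0"
  shows "emeasure P {\<omega>\<in>space P. \<exists>t\<in>T. \<forall>x\<in>set t. Z (\<pi> x) \<omega> x}
     = emeasure (PiM V0 (\<lambda>v. distr P (fibsp \<pi> v) (Z v))) {w\<in>space (PiM V0 (\<lambda>v. distr P (fibsp \<pi> v) (Z v))). \<exists>t\<in>T. \<forall>x\<in>set t. w (\<pi> x) x}"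
proof -
  interpret prob_space P by fact
  have rv: "\<And>v. v \<in> V0 \<Longrightarrow> random_variable (fibsp \<pi> v) (Z v)"
    using ind unfolding indep_vars_def by blast
  define h where "h = (\<lambda>\<omega>. \<lambda>v\<in>V0. Z v \<omega>)"
  have deq: "distr P (PiM V0 (fibsp \<pi>)) h = PiM V0 (\<lambda>v. distr P (fibsp \<pi> v) (Z v))"
    using indep_vars_iff_distr_eq_PiM'[OF V0 rv] ind unfolding h_def by simp
  have hm: "h \<in> measurable P (PiM V0 (fibsp \<pi>))"
    unfolding h_def by (rule measurable_restrict) (rule rv)
  have sp: "space (PiM V0 (\<lambda>v. distr P (fibsp \<pi> v) (Z v))) = space (PiM V0 (fibsp \<pi>))"
    by (simp add: space_PiM)
  define E where "E = {w\<in>space (PiM V0 (fibsp \<pi>)). \<exists>t\<in>T. \<forall>x\<in>set t. w (\<pi> x) x}"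
  have Em: "E \<in> sets (PiM V0 (fibsp \<pi>))"
    unfolding E_def by (rule evt_meas) (use TI in auto)
  have "emeasure (PiM V0 (\<lambda>v. distr P (fibsp \<pi> v) (Z v))) E = emeasure P (h -` E \<inter> space P)"
    unfolding deq[symmetric] by (rule emeasure_distr[OF hm Em])
  also have "h -` E \<inter> space P = {\<omega>\<in>space P. \<exists>t\<in>T. \<forall>x\<in>set t. Z (\<pi> x) \<omega> x}"
  proof -
    have "\<And>\<omega>. \<omega> \<in> space P \<Longrightarrow> h \<omega> \<in> space (PiM V0 (fibsp \<pi>))"
      using measurable_space[OF hm] by blast
    then show ?thesis unfolding E_def h_def using TI by auto
  qed
  finally show ?thesis unfolding E_def sp by simp
qed

lemma site_perc_prob: "prob_space (site_perc p)"
  unfolding site_perc_def by (rule prob_space_PiM) (rule prob_space_measure_pmf)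

lemma site_perc_comp: "distr (site_perc p) (measure_pmf (bernoulli_pmf (p v))) (\<lambda>Y. Y v) = measure_pmf (bernoulli_pmf (p v))"
  unfolding site_perc_def by (rule distr_PiM_component) (auto intro: prob_space_measure_pmf)

lemma site_perc_single:
  assumes "0 \<le> p v" "p v \<le> 1"
  shows "emeasure (site_perc p) {Y\<in>space (site_perc p). Y v} = ennreal (p v)"
proof -
  have m: "(\<lambda>Y. Y v) \<in> measurable (site_perc p) (measure_pmf (bernoulli_pmf (p v)))"
    unfolding site_perc_def by (rule measurable_component_singleton) simp
  have "emeasure (site_perc p) {Y\<in>space (site_perc p). Y v} = emeasure (distr (site_perc p) (measure_pmf (bernoulli_pmf (p v))) (\<lambda>Y. Y v)) {True}"
    by (subst emeasure_distr[OF m]) (auto intro!: arg_cong[where f="emeasure (site_perc p)"])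
  also have "\<dots> = ennreal (p v)"
    unfolding site_perc_comp using assms by (simp add: emeasure_pmf_single)
  finally show ?thesis .
qed

lemma site_perc_indep:
  "prob_space.indep_vars (site_perc p) (\<lambda>v. measure_pmf (bernoulli_pmf (p v))) (\<lambda>v Y. Y v) UNIV"
proof -
  interpret prob_space "site_perc p" by (rule site_perc_prob)
  have rv: "\<And>v. v \<in> UNIV \<Longrightarrow> random_variable (measure_pmf (bernoulli_pmf (p v))) (\<lambda>Y. Y v)"
    unfolding site_perc_def by (rule measurable_component_singleton) simp
  have eqn: "distr (site_perc p) (PiM UNIV (\<lambda>v. measure_pmf (bernoulli_pmf (p v)))) (\<lambda>Y. \<lambda>v\<in>UNIV. Y v)
      = PiM UNIV (\<lambda>v. distr (site_perc p) (measure_pmf (bernoulli_pmf (p v))) (\<lambda>Y. Y v))"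
    unfolding site_perc_comp by (simp add: site_perc_def restrict_UNIV)
  have iff: "indep_vars (\<lambda>v. measure_pmf (bernoulli_pmf (p v))) (\<lambda>v Y. Y v) UNIV \<longleftrightarrow>
     distr (site_perc p) (PiM UNIV (\<lambda>v. measure_pmf (bernoulli_pmf (p v)))) (\<lambda>Y. \<lambda>v\<in>UNIV. Y v)
      = PiM UNIV (\<lambda>v. distr (site_perc p) (measure_pmf (bernoulli_pmf (p v))) (\<lambda>Y. Y v))"
    by (rule indep_vars_iff_distr_eq_PiM'[where I=UNIV and M'="\<lambda>v. measure_pmf (bernoulli_pmf (p v))" and X="\<lambda>v Y. Y v"]) (use rv in blast)+
  show ?thesis using iff eqn by blast
qed

lemma site_perc_indep2:
  fixes \<pi> :: "'a \<Rightarrow> 'b"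
  shows "prob_space.indep_vars (site_perc p) (fibsp \<pi>) (\<lambda>v Y. restrict (\<lambda>_. Y v) (\<pi> -` {v})) UNIV"
proof -
  interpret prob_space "site_perc p" by (rule site_perc_prob)
  have "indep_vars (fibsp \<pi>) (\<lambda>v Y. (\<lambda>b. restrict (\<lambda>_. b) (\<pi> -` {v})) (Y v)) UNIV"
  proof (rule indep_vars_compose2[OF site_perc_indep])
    fix v :: 'b
    have eq: "measurable (measure_pmf (bernoulli_pmf (p v))) (fibsp \<pi> v) = measurable (count_space UNIV) (fibsp \<pi> v)"
      by (rule measurable_cong_sets) auto
    show "(\<lambda>b. restrict (\<lambda>_. b) (\<pi> -` {v})) \<in> measurable (measure_pmf (bernoulli_pmf (p v))) (fibsp \<pi> v)"
      unfolding eq measurable_count_space_eq1 by (auto simp: fibsp_def space_PiM)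
  qed
  then show ?thesis by simp
qed

lemma key_finite:
  fixes \<pi> :: "'a::countable \<Rightarrow> 'b" and p :: "'b \<Rightarrow> real" and M :: "'c measure"
    and X :: "'c \<Rightarrow> 'a \<Rightarrow> bool" and T :: "'a list set"
  assumes p01: "\<And>v. 0 \<le> p v \<and> p v \<le> 1" and Mp: "prob_space M"
    and Xindep: "prob_space.indep_vars M (fibsp \<pi>) (\<lambda>v \<omega>. restrict (X \<omega>) (\<pi> -` {v})) UNIV"
    and Xprob: "\<And>x. measure M {\<omega> \<in> space M. X \<omega> x} \<ge> p (\<pi> x)"
    and fin: "finite T" and Tinj: "\<And>t. t \<in> T \<Longrightarrow> inj_on \<pi> (set t)"
  shows "emeasure (site_perc p) {Y\<in>space (site_perc p). \<exists>t\<in>T. \<forall>x\<in>set t. Y (\<pi> x)}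
      \<le> emeasure M {\<omega>\<in>space M. \<exists>t\<in>T. \<forall>x\<in>set t. X \<omega> x}"
proof -
  interpret Mp: prob_space M by fact
  interpret Sp: prob_space "site_perc p" by (rule site_perc_prob)
  define V0 where "V0 = insert undefined (\<pi> ` (\<Union>t\<in>T. set t))"
  have V0f: "finite V0" unfolding V0_def using fin by auto
  have V0ne: "V0 \<noteq> {}" unfolding V0_def by auto
  have TI: "\<And>t x. t \<in> T \<Longrightarrow> x \<in> set t \<Longrightarrow> \<pi> x \<in> V0" unfolding V0_def by auto
  define Zm where "Zm = (\<lambda>v \<omega>. restrict (X \<omega>) (\<pi> -` {v}))"
  define Zs where "Zs = (\<lambda>v (Y::'b\<Rightarrow>bool). restrict (\<lambda>_. Y v) (\<pi> -` {v}))"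
  define \<mu> where "\<mu> = (\<lambda>v. distr M (fibsp \<pi> v) (Zm v))"
  define \<nu> where "\<nu> = (\<lambda>v. distr (site_perc p) (fibsp \<pi> v) (Zs v))"
  have indM: "Mp.indep_vars (fibsp \<pi>) Zm V0"
    using Mp.indep_vars_subset[OF Xindep] unfolding Zm_def by blast
  have indS: "Sp.indep_vars (fibsp \<pi>) Zs V0"
    using Sp.indep_vars_subset[OF site_perc_indep2] unfolding Zs_def by blast
  have Zmm: "\<And>v. Zm v \<in> measurable M (fibsp \<pi> v)"
    using Xindep unfolding Mp.indep_vars_def Zm_def by blast
  have Zsm: "\<And>v. Zs v \<in> measurable (site_perc p) (fibsp \<pi> v)"
    using site_perc_indep2[of p \<pi>] unfolding Sp.indep_vars_def Zs_def by blast
  have eM: "emeasure M {\<omega>\<in>space M. \<exists>t\<in>T. \<forall>x\<in>set t. X \<omega> x}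
     = emeasure (PiM V0 \<mu>) {w\<in>space (PiM V0 \<mu>). \<exists>t\<in>T. \<forall>x\<in>set t. w (\<pi> x) x}"
    using transfer[OF Mp V0ne indM TI] unfolding \<mu>_def by (simp add: Zm_def)
  have eS: "emeasure (site_perc p) {Y\<in>space (site_perc p). \<exists>t\<in>T. \<forall>x\<in>set t. Y (\<pi> x)}
     = emeasure (PiM V0 \<nu>) {w\<in>space (PiM V0 \<nu>). \<exists>t\<in>T. \<forall>x\<in>set t. w (\<pi> x) x}"
    using transfer[OF site_perc_prob V0ne indS TI] unfolding \<nu>_def by (simp add: Zs_def)
  have mx: "emeasure (PiM V0 (\<lambda>u. if u \<in> V0 then \<nu> u else \<mu> u)) {w\<in>space (PiM V0 (\<lambda>u. if u \<in> V0 then \<nu> u else \<mu> u)). \<exists>t\<in>T. \<forall>x\<in>set t. w (\<pi> x) x}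
       \<le> emeasure (PiM V0 \<mu>) {w\<in>space (PiM V0 \<mu>). \<exists>t\<in>T. \<forall>x\<in>set t. w (\<pi> x) x}"
  proof (rule mix[where q=p])
    show "finite V0" by fact
    show "\<And>v. v \<in> V0 \<Longrightarrow> prob_space (\<mu> v)" unfolding \<mu>_def by (rule Mp.prob_space_distr[OF Zmm])
    show "\<And>v. v \<in> V0 \<Longrightarrow> sets (\<mu> v) = sets (fibsp \<pi> v)" unfolding \<mu>_def by simp
    show "\<And>v. v \<in> V0 \<Longrightarrow> prob_space (\<nu> v)" unfolding \<nu>_def by (rule Sp.prob_space_distr[OF Zsm])
    show "\<And>v. v \<in> V0 \<Longrightarrow> sets (\<nu> v) = sets (fibsp \<pi> v)" unfolding \<nu>_def by simp
    show "\<And>t. t \<in> T \<Longrightarrow> inj_on \<pi> (set t)" by (rule Tinj)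
    show "\<And>t x. t \<in> T \<Longrightarrow> x \<in> set t \<Longrightarrow> \<pi> x \<in> V0" by (rule TI)
    show "V0 \<subseteq> V0" by simp
  next
    fix x assume "\<pi> x \<in> V0"
    have sx: "{a\<in>space (fibsp \<pi> (\<pi> x)). a x} \<in> sets (fibsp \<pi> (\<pi> x))"
      using pred_fib_comp[of \<pi> x "\<pi> x"] unfolding pred_def by simp
    have "emeasure (\<mu> (\<pi> x)) {a\<in>space (\<mu> (\<pi> x)). a x} = emeasure M (Zm (\<pi> x) -` {a\<in>space (fibsp \<pi> (\<pi> x)). a x} \<inter> space M)"
      unfolding \<mu>_def by (simp add: emeasure_distr[OF Zmm sx])
    also have "Zm (\<pi> x) -` {a\<in>space (fibsp \<pi> (\<pi> x)). a x} \<inter> space M = {\<omega> \<in> space M. X \<omega> x}"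
      using measurable_space[OF Zmm[of "\<pi> x"]] unfolding Zm_def by auto
    also have "emeasure M {\<omega> \<in> space M. X \<omega> x} = ennreal (measure M {\<omega> \<in> space M. X \<omega> x})"
      by (rule Mp.emeasure_eq_measure)
    finally show "ennreal (p (\<pi> x)) \<le> emeasure (\<mu> (\<pi> x)) {a\<in>space (\<mu> (\<pi> x)). a x}"
      using Xprob[of x] by (simp add: ennreal_leI)
  next
    fix v S assume v: "v \<in> V0" and S: "restrict (\<lambda>_. False) (\<pi> -` {v}) \<notin> S"
    show "emeasure (\<nu> v) S \<le> ennreal (p v)"
    proof (cases "S \<in> sets (fibsp \<pi> v)")
      case True
      have "emeasure (\<nu> v) S = emeasure (site_perc p) (Zs v -` S \<inter> space (site_perc p))"
        unfolding \<nu>_def by (rule emeasure_distr[OF Zsm True])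
      also have "\<dots> \<le> emeasure (site_perc p) {Y\<in>space (site_perc p). Y v}"
      proof (rule emeasure_mono)
        show "Zs v -` S \<inter> space (site_perc p) \<subseteq> {Y \<in> space (site_perc p). Y v}"
        proof
          fix Y assume Y: "Y \<in> Zs v -` S \<inter> space (site_perc p)"
          show "Y \<in> {Y \<in> space (site_perc p). Y v}"
          proof (cases "Y v")
            case False
            then have "Zs v Y = restrict (\<lambda>_. False) (\<pi> -` {v})" unfolding Zs_def by simp
            then show ?thesis using Y S by auto
          qed (use Y in blast)
        qed
        have eq: "measurable (site_perc p) (measure_pmf (bernoulli_pmf (p v))) = measurable (site_perc p) (count_space UNIV)"
          by (rule measurable_cong_sets) auto
        have "(\<lambda>Y. Y v) \<in> measurable (site_perc p) (measure_pmf (bernoulli_pmf (p v)))"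
          unfolding site_perc_def by (rule measurable_component_singleton) simp
        then have "Measurable.pred (site_perc p) (\<lambda>Y. Y v)" unfolding eq .
        then show "{Y \<in> space (site_perc p). Y v} \<in> sets (site_perc p)"
          unfolding pred_def .
      qed
      also have "\<dots> = ennreal (p v)" by (rule site_perc_single) (use p01 in auto)
      finally show ?thesis .
    next
      case False
      then have "emeasure (\<nu> v) S = 0" unfolding \<nu>_def by (simp add: emeasure_notin_sets)
      then show ?thesis by simp
    qed
  qed
  have "PiM V0 (\<lambda>u. if u \<in> V0 then \<nu> u else \<mu> u) = PiM V0 \<nu>" by (rule PiM_cong) auto
  then have "emeasure (PiM V0 \<nu>) {w\<in>space (PiM V0 \<nu>). \<exists>t\<in>T. \<forall>x\<in>set t. w (\<pi> x) x}
       \<le> emeasure (PiM V0 \<mu>) {w\<in>space (PiM V0 \<mu>). \<exists>t\<in>T. \<forall>x\<in>set t. w (\<pi> x) x}"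
    using mx by (simp only:)
  then show ?thesis unfolding eM eS .
qed

lemma key:
  fixes \<pi> :: "'a::countable \<Rightarrow> 'b" and p :: "'b \<Rightarrow> real" and M :: "'c measure"
    and X :: "'c \<Rightarrow> 'a \<Rightarrow> bool" and T :: "'a list set"
  assumes p01: "\<And>v. 0 \<le> p v \<and> p v \<le> 1" and Mp: "prob_space M"
    and Xindep: "prob_space.indep_vars M (fibsp \<pi>) (\<lambda>v \<omega>. restrict (X \<omega>) (\<pi> -` {v})) UNIV"
    and Xprob: "\<And>x. measure M {\<omega> \<in> space M. X \<omega> x} \<ge> p (\<pi> x)"
    and Xmeas: "\<And>x. {\<omega> \<in> space M. X \<omega> x} \<in> sets M"
    and Tinj: "\<And>t. t \<in> T \<Longrightarrow> inj_on \<pi> (set t)"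
  shows "emeasure (site_perc p) {Y\<in>space (site_perc p). \<exists>t\<in>T. \<forall>x\<in>set t. Y (\<pi> x)}
      \<le> emeasure M {\<omega>\<in>space M. \<exists>t\<in>T. \<forall>x\<in>set t. X \<omega> x}"
proof -
  define Tj where "Tj = (\<lambda>j::nat. {t\<in>T. to_nat t \<le> j})"
  define A where "A = (\<lambda>j. {Y\<in>space (site_perc p). \<exists>t\<in>Tj j. \<forall>x\<in>set t. Y (\<pi> x)})"
  have finTj: "finite (Tj j)" for j
  proof -
    have "Tj j \<subseteq> to_nat -` {..j}" unfolding Tj_def by auto
    moreover have "finite (to_nat -` {..j} :: 'a list set)"
      by (rule finite_vimageI) (auto simp: inj_to_nat)
    ultimately show ?thesis by (rule finite_subset)
  qed
  have predY: "Measurable.pred (site_perc p) (\<lambda>Y. Y v)" for v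
  proof -
    have eq: "measurable (site_perc p) (measure_pmf (bernoulli_pmf (p v))) = measurable (site_perc p) (count_space UNIV)"
      by (rule measurable_cong_sets) auto
    have "(\<lambda>Y. Y v) \<in> measurable (site_perc p) (measure_pmf (bernoulli_pmf (p v)))"
      unfolding site_perc_def by (rule measurable_component_singleton) simp
    then show ?thesis unfolding eq .
  qed
  have Am: "A j \<in> sets (site_perc p)" for j
    unfolding A_def pred_def[symmetric] by (rule pred_evt) (rule predY)
  have Bm: "{\<omega>\<in>space M. \<exists>t\<in>T. \<forall>x\<in>set t. X \<omega> x} \<in> sets M"
    unfolding pred_def[symmetric] by (rule pred_evt) (use Xmeas in \<open>simp add: pred_def\<close>)
  have inc: "incseq A" unfolding A_def Tj_def incseq_def by fastforce
  have U: "(\<Union>j. A j) = {Y\<in>space (site_perc p). \<exists>t\<in>T. \<forall>x\<in>set t. Y (\<pi> x)}"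
    unfolding A_def Tj_def by blast
  have "emeasure (site_perc p) {Y\<in>space (site_perc p). \<exists>t\<in>T. \<forall>x\<in>set t. Y (\<pi> x)} = (SUP j. emeasure (site_perc p) (A j))"
    unfolding U[symmetric] by (rule SUP_emeasure_incseq[symmetric]) (use Am inc in auto)
  also have "\<dots> \<le> emeasure M {\<omega>\<in>space M. \<exists>t\<in>T. \<forall>x\<in>set t. X \<omega> x}"
  proof (rule SUP_least)
    fix j
    have "emeasure (site_perc p) (A j) \<le> emeasure M {\<omega>\<in>space M. \<exists>t\<in>Tj j. \<forall>x\<in>set t. X \<omega> x}"
      unfolding A_def by (rule key_finite[OF p01 Mp Xindep Xprob finTj]) (auto simp: Tj_def intro: Tinj)
    also have "\<dots> \<le> emeasure M {\<omega>\<in>space M. \<exists>t\<in>T. \<forall>x\<in>set t. X \<omega> x}"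
      by (rule emeasure_mono[OF _ Bm]) (auto simp: Tj_def)
    finally show "emeasure (site_perc p) (A j) \<le> emeasure M {\<omega>\<in>space M. \<exists>t\<in>T. \<forall>x\<in>set t. X \<omega> x}" .
  qed
  finally show ?thesis .
qed


definition fpath :: "('v \<Rightarrow> 'v \<Rightarrow> bool) \<Rightarrow> ('v \<Rightarrow> bool) \<Rightarrow> nat \<Rightarrow> (nat \<Rightarrow> 'v) \<Rightarrow> bool" where
  "fpath E R l f \<longleftrightarrow> inj_on f {..l} \<and> (\<forall>i<l. E (f i) (f (Suc i))) \<and> (\<forall>i\<le>l. R (f i))"

lemma fpath_mono: "fpath E R l f \<Longrightarrow> l' \<le> l \<Longrightarrow> fpath E R l' f"
  unfolding fpath_def by (auto intro: inj_on_subset)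

lemma fpath_cong: "(\<And>i. i \<le> l \<Longrightarrow> f i = g i) \<Longrightarrow> fpath E R l f = fpath E R l g"
  unfolding fpath_def by (auto simp: inj_on_def)

definition kgood :: "('v \<Rightarrow> 'v \<Rightarrow> bool) \<Rightarrow> ('v \<Rightarrow> bool) \<Rightarrow> nat \<Rightarrow> (nat \<Rightarrow> 'v) \<Rightarrow> bool" where
  "kgood E R l f \<longleftrightarrow> fpath E R l f \<and> (\<forall>L\<ge>l. \<exists>h. fpath E R L h \<and> (\<forall>i\<le>l. h i = f i))"

lemma kgood_step:
  assumes lf: "finite {y. E (f l) y}" and g: "kgood E R l f"
  shows "\<exists>w. kgood E R (Suc l) (f(Suc l := w))"
proof (rule ccontr)
  assume nw: "\<not> (\<exists>w. kgood E R (Suc l) (f(Suc l := w)))"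
  define Nb where "Nb = {y. E (f l) y}"
  have "\<forall>w\<in>Nb. \<exists>L. fpath E R (Suc l) (f(Suc l := w)) \<longrightarrow>
           Suc l \<le> L \<and> \<not> (\<exists>h. fpath E R L h \<and> (\<forall>i\<le>Suc l. h i = (f(Suc l := w)) i))"
  proof
    fix w assume "w \<in> Nb"
    have "\<not> kgood E R (Suc l) (f(Suc l := w))" using nw by blast
    then show "\<exists>L. fpath E R (Suc l) (f(Suc l := w)) \<longrightarrow>
           Suc l \<le> L \<and> \<not> (\<exists>h. fpath E R L h \<and> (\<forall>i\<le>Suc l. h i = (f(Suc l := w)) i))"
      unfolding kgood_def by auto
  qed
  then obtain Lw where Lw: "\<And>w. w \<in> Nb \<Longrightarrow> fpath E R (Suc l) (f(Suc l := w)) \<Longrightarrow>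
           Suc l \<le> Lw w \<and> \<not> (\<exists>h. fpath E R (Lw w) h \<and> (\<forall>i\<le>Suc l. h i = (f(Suc l := w)) i))"
    by (drule_tac bchoice) blast
  define B where "B = Max (insert (Suc l) (Lw ` Nb))"
  have finB: "finite (insert (Suc l) (Lw ` Nb))" using lf unfolding Nb_def by simp
  have B1: "Suc l \<le> B" unfolding B_def using finB by simp
  have B2: "\<And>w. w \<in> Nb \<Longrightarrow> Lw w \<le> B" unfolding B_def using finB by simp
  obtain h where h: "fpath E R B h" "\<And>i. i \<le> l \<Longrightarrow> h i = f i"
  proof -
    have "l \<le> B" using B1 by simp
    then show ?thesis using that g unfolding kgood_def by blast
  qed
  define w where "w = h (Suc l)"
  have "E (h l) (h (Suc l))" using h(1) B1 unfolding fpath_def by auto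
  then have wN: "w \<in> Nb" unfolding Nb_def w_def using h(2)[of l] by simp
  have agree: "\<And>i. i \<le> Suc l \<Longrightarrow> h i = (f(Suc l := w)) i"
    using h(2) unfolding w_def by (auto simp: le_Suc_eq)
  have "fpath E R (Suc l) h" using fpath_mono[OF h(1) B1] .
  then have fp: "fpath E R (Suc l) (f(Suc l := w))" using fpath_cong[of "Suc l" h "f(Suc l := w)" E R] agree by blast
  have nn: "\<not> (\<exists>h. fpath E R (Lw w) h \<and> (\<forall>i\<le>Suc l. h i = (f(Suc l := w)) i))"
    using Lw[OF wN fp] by (rule conjunct2)
  have "fpath E R (Lw w) h" using fpath_mono[OF h(1) B2[OF wN]] .
  then have "\<exists>h. fpath E R (Lw w) h \<and> (\<forall>i\<le>Suc l. h i = (f(Suc l := w)) i)"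
    using agree by (intro exI[of _ h] conjI allI impI) 
  with nn show False by (rule notE)
qed

primrec kseq :: "('v \<Rightarrow> 'v \<Rightarrow> bool) \<Rightarrow> ('v \<Rightarrow> bool) \<Rightarrow> 'v \<Rightarrow> nat \<Rightarrow> nat \<Rightarrow> 'v" where
  "kseq E R x0 0 = (\<lambda>_. x0)"
| "kseq E R x0 (Suc n) = (kseq E R x0 n)(Suc n := (SOME w. kgood E R (Suc n) ((kseq E R x0 n)(Suc n := w))))"

lemma kseq_agree: "i \<le> n \<Longrightarrow> kseq E R x0 n i = kseq E R x0 i i"
proof (induction n)
  case 0 then show ?case by simp
next
  case (Suc n)
  show ?case
  proof (cases "i = Suc n")
    case True then show ?thesis by simp
  next
    case False then show ?thesis using Suc by simp
  qed
qed

lemma konig: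
  assumes lf: "\<And>x. finite {y. E x y}"
    and all: "\<And>l. \<exists>f. fpath E R l f \<and> f 0 = x0"
  shows "\<exists>g. inf_path E g \<and> (\<forall>m. R (g m))"
proof -
  have g0: "kgood E R 0 (\<lambda>_. x0)"
    unfolding kgood_def
  proof (intro conjI allI impI)
    obtain f where f: "fpath E R 0 f" "f 0 = x0" using all by blast
    then show "fpath E R 0 (\<lambda>_. x0)" unfolding fpath_def by simp
  next
    fix L :: nat
    obtain f where f: "fpath E R L f" "f 0 = x0" using all by blast
    then show "\<exists>h. fpath E R L h \<and> (\<forall>i\<le>0. h i = x0)" by auto
  qed
  have kg: "kgood E R n (kseq E R x0 n)" for n
  proof (induction n)
    case 0 then show ?case using g0 by simp
  next
    case (Suc n)
    have "\<exists>w. kgood E R (Suc n) ((kseq E R x0 n)(Suc n := w))"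
      by (rule kgood_step[OF lf Suc])
    then have "kgood E R (Suc n) ((kseq E R x0 n)(Suc n := (SOME w. kgood E R (Suc n) ((kseq E R x0 n)(Suc n := w)))))"
      by (rule someI_ex)
    then show ?case by (simp only: kseq.simps)
  qed
  define g where "g = (\<lambda>m. kseq E R x0 m m)"
  have fp: "fpath E R n g" for n
  proof -
    have a: "fpath E R n (kseq E R x0 n)" using kg[of n] unfolding kgood_def by (rule conjunct1)
    have "\<And>i. i \<le> n \<Longrightarrow> kseq E R x0 n i = g i" unfolding g_def by (rule kseq_agree)
    then have "fpath E R n (kseq E R x0 n) = fpath E R n g" by (rule fpath_cong)
    then show ?thesis using a by simp
  qed
  have inj: "inj_on g {0..}"
  proof (rule inj_onI)
    fix i j assume e: "g i = g j"
    have "inj_on g {..max i j}" using fp[of "max i j"] unfolding fpath_def by (rule conjunct1)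
    then show "i = j" using e by (rule inj_onD) auto
  qed
  have ed: "\<forall>m\<ge>0. E (g m) (g (Suc m))"
  proof (intro allI impI)
    fix m :: nat
    show "E (g m) (g (Suc m))" using fp[of "Suc m"] unfolding fpath_def by simp
  qed
  have r: "\<forall>m. R (g m)"
  proof
    fix m show "R (g m)" using fp[of m] unfolding fpath_def by simp
  qed
  show ?thesis
    using inj ed r unfolding inf_path_from_def by blast
qed


lemma hirp_iff:
  assumes lf: "\<And>x. finite {y. E x y}"
  shows "has_inf_retained_path E R \<longleftrightarrow> (\<exists>x0. \<forall>l. \<exists>f. fpath E R l f \<and> f 0 = x0)"
proof
  assume "has_inf_retained_path E R"
  then obtain g where g: "inf_path E g" "\<forall>m. R (g m)" unfolding has_inf_retained_path_def by blast
  have "fpath E R l g" for l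
    using g unfolding fpath_def inf_path_from_def by (auto intro: inj_on_subset)
  then show "\<exists>x0. \<forall>l. \<exists>f. fpath E R l f \<and> f 0 = x0" by blast
next
  assume "\<exists>x0. \<forall>l. \<exists>f. fpath E R l f \<and> f 0 = x0"
  then obtain x0 where "\<And>l. \<exists>f. fpath E R l f \<and> f 0 = x0" by blast
  from konig[OF lf this] show "has_inf_retained_path E R" unfolding has_inf_retained_path_def .
qed

lemma fpath_list:
  "(\<exists>f. fpath E R l f \<and> f 0 = x0) \<longleftrightarrow> (\<exists>xs. length xs = Suc l \<and> fpath E R l (nth xs) \<and> xs ! 0 = x0)"
proof
  assume "\<exists>f. fpath E R l f \<and> f 0 = x0"
  then obtain f where f: "fpath E R l f" "f 0 = x0" by blast
  define xs where "xs = map f [0..<Suc l]"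
  have "\<And>i. i \<le> l \<Longrightarrow> nth xs i = f i" unfolding xs_def by (simp del: upt_Suc add: nth_map_upt)
  then have "fpath E R l (nth xs) = fpath E R l f" by (rule fpath_cong)
  moreover have "length xs = Suc l" unfolding xs_def by simp
  moreover have "xs ! 0 = x0" unfolding xs_def using f(2) by (simp del: upt_Suc add: nth_map_upt)
  ultimately show "\<exists>xs. length xs = Suc l \<and> fpath E R l (nth xs) \<and> xs ! 0 = x0" using f(1) by blast
next
  assume "\<exists>xs. length xs = Suc l \<and> fpath E R l (nth xs) \<and> xs ! 0 = x0"
  then show "\<exists>f. fpath E R l f \<and> f 0 = x0" by blast
qed

lemma pigeon:
  assumes K: "finite K" and ex: "\<And>l::nat. \<exists>x\<in>K. P x l" and mono: "\<And>x l l'. P x l \<Longrightarrow> l' \<le> l \<Longrightarrow> P x l'"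
  shows "\<exists>x\<in>K. \<forall>l. P x l"
proof (rule ccontr)
  assume "\<not> (\<exists>x\<in>K. \<forall>l. P x l)"
  then have "\<forall>x\<in>K. \<exists>l. \<not> P x l" by blast
  then obtain Lx where Lx: "\<And>x. x \<in> K \<Longrightarrow> \<not> P x (Lx x)" by metis
  define L where "L = Max (insert 0 (Lx ` K))"
  obtain x where x: "x \<in> K" "P x L" using ex by blast
  have "Lx x \<le> L" unfolding L_def using K x(1) by simp
  then have "P x (Lx x)" using mono[OF x(2)] by blast
  with Lx[OF x(1)] show False by blast
qed

theorem theorem4p2:
  fixes EL :: "'a::countable \<Rightarrow> 'a \<Rightarrow> bool"
    and ES :: "'b::countable \<Rightarrow> 'b \<Rightarrow> bool"
    and \<pi> :: "'a \<Rightarrow> 'b"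
    and p :: "'b \<Rightarrow> real"
    and M :: "'c measure"
    and X :: "'c \<Rightarrow> 'a \<Rightarrow> bool"
  assumes gL: "simple_lf_graph EL" and gS: "simple_lf_graph ES"
    and surj: "surj \<pi>"
    and lift: "\<exists>\<Gamma> :: (nat \<Rightarrow> 'b) \<Rightarrow> nat \<times> (nat \<Rightarrow> 'a).
       \<Gamma> \<in> measurable (path_space ES) (count_space UNIV \<Otimes>\<^sub>M seq_space) \<and>
       (\<forall>\<gamma>. inf_path ES \<gamma> \<longrightarrow>
          inf_path_from EL (fst (\<Gamma> \<gamma>)) (snd (\<Gamma> \<gamma>)) \<and>
          (\<forall>m\<ge>fst (\<Gamma> \<gamma>). \<pi> (snd (\<Gamma> \<gamma>) m) = \<gamma> m))"
    and p01: "\<And>v. 0 \<le> p v \<and> p v \<le> 1"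
    and M: "prob_space M"
    and Xmeas: "\<And>x. {\<omega> \<in> space M. X \<omega> x} \<in> sets M"
    and Xindep: "prob_space.indep_vars M (\<lambda>v. PiM (\<pi> -` {v}) (\<lambda>_. count_space UNIV))
                   (\<lambda>v \<omega>. restrict (X \<omega>) (\<pi> -` {v})) UNIV"
    and Xprob: "\<And>x. measure M {\<omega> \<in> space M. X \<omega> x} \<ge> p (\<pi> x)"
  shows "measure M {\<omega> \<in> space M. has_inf_retained_path EL (X \<omega>)}
         \<ge> measure (site_perc p) {\<omega> \<in> space (site_perc p). has_inf_retained_path ES \<omega>}"
proof -
  interpret Mp: prob_space M by (rule M)
  interpret Sp: prob_space "site_perc p" by (rule site_perc_prob)
  obtain \<Gamma> :: "(nat \<Rightarrow> 'b) \<Rightarrow> nat \<times> (nat \<Rightarrow> 'a)" where \<Gamma>: "\<And>\<gamma>. inf_path ES \<gamma> \<Longrightarrow>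
          inf_path_from EL (fst (\<Gamma> \<gamma>)) (snd (\<Gamma> \<gamma>)) \<and> (\<forall>m\<ge>fst (\<Gamma> \<gamma>). \<pi> (snd (\<Gamma> \<gamma>) m) = \<gamma> m)"
    using lift by blast
  define nn where "nn = (\<lambda>\<gamma>. fst (\<Gamma> \<gamma>))"
  define ll where "ll = (\<lambda>\<gamma>. snd (\<Gamma> \<gamma>))"
  have \<Gamma>1: "\<And>\<gamma>. inf_path ES \<gamma> \<Longrightarrow> inf_path_from EL (nn \<gamma>) (ll \<gamma>)" using \<Gamma> unfolding nn_def ll_def by blast
  have \<Gamma>2: "\<And>\<gamma> m. inf_path ES \<gamma> \<Longrightarrow> nn \<gamma> \<le> m \<Longrightarrow> \<pi> (ll \<gamma> m) = \<gamma> m" using \<Gamma> unfolding nn_def ll_def by blast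
  have lfL: "\<And>x. finite {y. EL x y}" using gL unfolding simple_lf_graph_def by blast
  have Xind': "prob_space.indep_vars M (fibsp \<pi>) (\<lambda>v \<omega>. restrict (X \<omega>) (\<pi> -` {v})) UNIV"
    using Xindep unfolding fibsp_def[abs_def] .
  define G where "G = (\<lambda>k. {\<gamma>. inf_path ES \<gamma> \<and> nn \<gamma> \<le> k \<and> to_nat (ll \<gamma> (nn \<gamma>)) \<le> k})"
  define TT where "TT = (\<lambda>k N. (\<lambda>\<gamma>. map (ll \<gamma>) [nn \<gamma>..<N]) ` G k)"
  define AA where "AA = (\<lambda>k N. {Y\<in>space (site_perc p). \<exists>t\<in>TT k N. \<forall>x\<in>set t. Y (\<pi> x)})"
  define BB where "BB = (\<lambda>k N. {\<omega>\<in>space M. \<exists>t\<in>TT k N. \<forall>x\<in>set t. X \<omega> x})"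
  define LH where "LH = {\<omega> \<in> space M. has_inf_retained_path EL (X \<omega>)}"
  define RH where "RH = {\<omega> \<in> space (site_perc p). has_inf_retained_path ES \<omega>}"
  have Tinj: "inj_on \<pi> (set t)" if t: "t \<in> TT k N" for t k N
  proof -
    obtain \<gamma> where \<gamma>: "\<gamma> \<in> G k" "t = map (ll \<gamma>) [nn \<gamma>..<N]" using t unfolding TT_def by blast
    have ip: "inf_path ES \<gamma>" using \<gamma>(1) unfolding G_def by blast
    have injg: "inj_on \<gamma> {0..}" using ip unfolding inf_path_from_def by blast
    show ?thesis
    proof (rule inj_onI)
      fix x y assume x: "x \<in> set t" and y: "y \<in> set t" and e: "\<pi> x = \<pi> y"
      obtain a where a: "nn \<gamma> \<le> a" "x = ll \<gamma> a" using x \<gamma>(2) by auto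
      obtain b where b: "nn \<gamma> \<le> b" "y = ll \<gamma> b" using y \<gamma>(2) by auto
      have "\<gamma> a = \<gamma> b" using e \<Gamma>2[OF ip a(1)] \<Gamma>2[OF ip b(1)] a(2) b(2) by simp
      then have "a = b" using injg by (auto dest: inj_onD)
      then show "x = y" using a b by simp
    qed
  qed
  have keyk: "emeasure (site_perc p) (AA k N) \<le> emeasure M (BB k N)" for k N
    unfolding AA_def BB_def by (rule key[OF p01 M Xind' Xprob Xmeas Tinj])
  have mle: "measure (site_perc p) (AA k N) \<le> measure M (BB k N)" for k N
    using keyk[of k N] by (simp add: Sp.emeasure_eq_measure Mp.emeasure_eq_measure)
  have predY: "Measurable.pred (site_perc p) (\<lambda>Y. Y v)" for v
  proof -
    have eq: "measurable (site_perc p) (measure_pmf (bernoulli_pmf (p v))) = measurable (site_perc p) (count_space UNIV)"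
      by (rule measurable_cong_sets) auto
    have "(\<lambda>Y. Y v) \<in> measurable (site_perc p) (measure_pmf (bernoulli_pmf (p v)))"
      unfolding site_perc_def by (rule measurable_component_singleton) simp
    then show ?thesis unfolding eq .
  qed
  have AAm: "AA k N \<in> sets (site_perc p)" for k N
    unfolding AA_def pred_def[symmetric] by (rule pred_evt) (rule predY)
  have BBm: "BB k N \<in> sets M" for k N
    unfolding BB_def pred_def[symmetric] by (rule pred_evt) (use Xmeas in \<open>simp add: pred_def\<close>)
  have decA: "decseq (AA k)" for k
    unfolding decseq_def AA_def TT_def
  proof (intro allI impI subsetI)
    fix m n :: nat and Y assume mn: "m \<le> n"
      and Y: "Y \<in> {Y \<in> space (site_perc p). \<exists>t\<in>(\<lambda>\<gamma>. map (ll \<gamma>) [nn \<gamma>..<n]) ` G k. \<forall>x\<in>set t. Y (\<pi> x)}"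
    then obtain \<gamma> where g1: "\<gamma> \<in> G k" and g2: "\<forall>x\<in>set (map (ll \<gamma>) [nn \<gamma>..<n]). Y (\<pi> x)" and g3: "Y \<in> space (site_perc p)" by blast
    have g4: "\<forall>x\<in>set (map (ll \<gamma>) [nn \<gamma>..<m]). Y (\<pi> x)" using g2 mn by auto
    have g5: "map (ll \<gamma>) [nn \<gamma>..<m] \<in> (\<lambda>\<gamma>. map (ll \<gamma>) [nn \<gamma>..<m]) ` G k" using g1 by (rule imageI)
    show "Y \<in> {Y \<in> space (site_perc p). \<exists>t\<in>(\<lambda>\<gamma>. map (ll \<gamma>) [nn \<gamma>..<m]) ` G k. \<forall>x\<in>set t. Y (\<pi> x)}"
      using g3 g4 g5 by blast
  qed
  have decB: "decseq (BB k)" for k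
    unfolding decseq_def BB_def TT_def
  proof (intro allI impI subsetI)
    fix m n :: nat and \<omega> assume mn: "m \<le> n"
      and Y: "\<omega> \<in> {\<omega> \<in> space M. \<exists>t\<in>(\<lambda>\<gamma>. map (ll \<gamma>) [nn \<gamma>..<n]) ` G k. \<forall>x\<in>set t. X \<omega> x}"
    then obtain \<gamma> where g1: "\<gamma> \<in> G k" and g2: "\<forall>x\<in>set (map (ll \<gamma>) [nn \<gamma>..<n]). X \<omega> x" and g3: "\<omega> \<in> space M" by blast
    have g4: "\<forall>x\<in>set (map (ll \<gamma>) [nn \<gamma>..<m]). X \<omega> x" using g2 mn by auto
    have g5: "map (ll \<gamma>) [nn \<gamma>..<m] \<in> (\<lambda>\<gamma>. map (ll \<gamma>) [nn \<gamma>..<m]) ` G k" using g1 by (rule imageI)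
    show "\<omega> \<in> {\<omega> \<in> space M. \<exists>t\<in>(\<lambda>\<gamma>. map (ll \<gamma>) [nn \<gamma>..<m]) ` G k. \<forall>x\<in>set t. X \<omega> x}"
      using g3 g4 g5 by blast
  qed
  have limA: "(\<lambda>N. measure (site_perc p) (AA k N)) \<longlonglongrightarrow> measure (site_perc p) (\<Inter>N. AA k N)" for k
    by (rule Lim_measure_decseq) (use AAm decA in auto)
  have limB: "(\<lambda>N. measure M (BB k N)) \<longlonglongrightarrow> measure M (\<Inter>N. BB k N)" for k
    by (rule Lim_measure_decseq) (use BBm decB in auto)
  have CB: "measure (site_perc p) (\<Inter>N. AA k N) \<le> measure M (\<Inter>N. BB k N)" for k
    by (rule LIMSEQ_le[OF limA limB]) (use mle in auto)
  have LHm: "LH \<in> sets M"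
  proof -
    have "LH = {\<omega> \<in> space M. \<exists>x0. \<forall>l. \<exists>xs. length xs = Suc l \<and> inj_on (nth xs) {..l} \<and>
          (\<forall>i<l. EL (xs ! i) (xs ! Suc i)) \<and> (\<forall>i\<le>l. X \<omega> (xs ! i)) \<and> xs ! 0 = x0}"
      unfolding LH_def hirp_iff[OF lfL] fpath_list unfolding fpath_def by simp
    also have "\<dots> \<in> sets M"
      unfolding pred_def[symmetric] using Xmeas[unfolded pred_def[symmetric]] by measurable
    finally show ?thesis .
  qed
  have BL: "(\<Inter>N. BB k N) \<subseteq> LH" for k
  proof
    fix \<omega> assume \<omega>: "\<omega> \<in> (\<Inter>N. BB k N)"
    then have \<omega>s: "\<omega> \<in> space M" unfolding BB_def by blast
    define K where "K = {x::'a. to_nat x \<le> k}"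
    have Kf: "finite K"
    proof -
      have "K = to_nat -` {..k}" unfolding K_def by auto
      moreover have "finite (to_nat -` {..k} :: 'a set)"
        by (rule finite_vimageI) (auto simp: inj_to_nat)
      ultimately show ?thesis by simp
    qed
    have ex: "\<exists>x0\<in>K. \<exists>f. fpath EL (X \<omega>) l f \<and> f 0 = x0" for l
    proof -
      have "\<omega> \<in> BB k (k + l + 1)" using \<omega> by blast
      then obtain \<gamma> where \<gamma>: "\<gamma> \<in> G k" "\<forall>x\<in>set (map (ll \<gamma>) [nn \<gamma>..<k + l + 1]). X \<omega> x"
        unfolding BB_def TT_def by blast
      have ip: "inf_path ES \<gamma>" and nk: "nn \<gamma> \<le> k" and tk: "to_nat (ll \<gamma> (nn \<gamma>)) \<le> k"
        using \<gamma>(1) unfolding G_def by auto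
      have L: "inf_path_from EL (nn \<gamma>) (ll \<gamma>)" by (rule \<Gamma>1[OF ip])
      define f where "f = (\<lambda>i. ll \<gamma> (nn \<gamma> + i))"
      have "fpath EL (X \<omega>) l f"
        unfolding fpath_def
      proof (intro conjI allI impI)
        show "inj_on f {..l}"
        proof (rule inj_onI)
          fix i j assume "i \<in> {..l}" "j \<in> {..l}" "f i = f j"
          then have "nn \<gamma> + i = nn \<gamma> + j" using L unfolding inf_path_from_def f_def
            by (auto dest: inj_onD)
          then show "i = j" by simp
        qed
      next
        fix i assume "i < l"
        show "EL (f i) (f (Suc i))" using L unfolding inf_path_from_def f_def by auto
      next
        fix i assume i: "i \<le> l"
        have "nn \<gamma> + i \<in> set [nn \<gamma>..<k + l + 1]" using i nk by auto
        then show "X \<omega> (f i)" using \<gamma>(2) unfolding f_def by auto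
      qed
      moreover have "f 0 \<in> K" using tk unfolding f_def K_def by simp
      ultimately show ?thesis by blast
    qed
    have "\<exists>x0\<in>K. \<forall>l. \<exists>f. fpath EL (X \<omega>) l f \<and> f 0 = x0"
      by (rule pigeon[OF Kf ex]) (blast intro: fpath_mono)
    then have "has_inf_retained_path EL (X \<omega>)" unfolding hirp_iff[OF lfL] by blast
    then show "\<omega> \<in> LH" unfolding LH_def using \<omega>s by blast
  qed
  define CC where "CC = (\<lambda>k. \<Inter>N. AA k N)"
  have CL: "measure (site_perc p) (CC k) \<le> measure M LH" for k
    unfolding CC_def using CB[of k] Mp.finite_measure_mono[OF BL[of k] LHm] by linarith
  have incC: "incseq CC"
    unfolding incseq_def CC_def AA_def TT_def G_def by fastforce
  have CCm: "CC k \<in> sets (site_perc p)" for k unfolding CC_def using AAm by auto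
  have limC: "(\<lambda>k. measure (site_perc p) (CC k)) \<longlonglongrightarrow> measure (site_perc p) (\<Union>k. CC k)"
    by (rule Lim_measure_incseq) (use CCm incC in auto)
  have UC: "measure (site_perc p) (\<Union>k. CC k) \<le> measure M LH"
    by (rule LIMSEQ_le_const2[OF limC]) (use CL in auto)
  have RC: "RH \<subseteq> (\<Union>k. CC k)"
  proof
    fix Y assume "Y \<in> RH"
    then obtain \<gamma> where Ys: "Y \<in> space (site_perc p)" and ip: "inf_path ES \<gamma>" and r: "\<forall>m. Y (\<gamma> m)"
      unfolding RH_def has_inf_retained_path_def by blast
    define k where "k = max (nn \<gamma>) (to_nat (ll \<gamma> (nn \<gamma>)))"
    have \<gamma>G: "\<gamma> \<in> G k" unfolding G_def k_def using ip by auto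
    have "Y \<in> AA k N" for N
    proof -
      have "map (ll \<gamma>) [nn \<gamma>..<N] \<in> TT k N" unfolding TT_def using \<gamma>G by blast
      moreover have "\<forall>x\<in>set (map (ll \<gamma>) [nn \<gamma>..<N]). Y (\<pi> x)"
      proof
        fix x assume "x \<in> set (map (ll \<gamma>) [nn \<gamma>..<N])"
        then obtain m where m: "nn \<gamma> \<le> m" "x = ll \<gamma> m" by auto
        then show "Y (\<pi> x)" using \<Gamma>2[OF ip m(1)] r by simp
      qed
      ultimately show ?thesis unfolding AA_def using Ys by blast
    qed
    then show "Y \<in> (\<Union>k. CC k)" unfolding CC_def by blast
  qed
  have "measure (site_perc p) RH \<le> measure M LH"
  proof (cases "RH \<in> sets (site_perc p)")
    case True
    then have "measure (site_perc p) RH \<le> measure (site_perc p) (\<Union>k. CC k)"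
      by (intro Sp.finite_measure_mono[OF RC]) (use CCm in auto)
    then show ?thesis using UC by linarith
  next
    case False
    then show ?thesis by (simp add: measure_notin_sets)
  qed
  then show ?thesis unfolding LH_def RH_def .
qed

end
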